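(* Let $\mathcal G=(\mathcal V,\mathcal E)$ be a weakly connected digraph and let $e$ be a tight edge of $\mathcal G$. Then $\gamma(\mathcal G+e)=\gamma(\mathcal G)-1$, where $\mathcal G+e=(\mathcal V,\mathcal E\cup\{e\})$.
   Context: For a strongly connected component (SCC) $\mathcal S$ of a digraph $(\mathcal V,\mathcal E)$, let $\mathcal O_{\mathcal S}=\{(u,v)\in\mathcal E:u\in\mathcal S,v\notin\mathcal S\}$ and $\mathcal I_{\mathcal S}=\{(u,v)\in\mathcal E:u\notin\mathcal S,v\in\mathcal S\}$. $\mathcal S$ is a source SCC (s-SCC) if $\mathcal O_{\mathcal S}\neq\emptyset$ and $\mathcal I_{\mathcal S}=\emptyset$, and a target SCC (t-SCC) if $\mathcal O_{\mathcal S}=\emptyset$ and $\mathcal I_{\mathcal S}\neq\emptyset$. $\gamma(\mathcal G)$ is the maximum of the number of s-SCCs and the number of t-SCCs of $\mathcal G$. Write $a\rightsquigarrow b$ if there is a directed path from $a$ to $b$. If $\mathcal G$ has $\alpha$ s-SCCs and $\beta$ t-SCCs, an edge $(t,s)\in(\mathcal V\times\mathcal V)\setminus\mathcal E$ is tight if: (i) $s$ belongs to an s-SCC; (ii) $t$ belongs to a t-SCC; (iii) either $\alpha=1$ or there is $s'$ in an s-SCC different from that of $s$ with $s'\rightsquigarrow t$; (iv) either $\beta=1$ or there is $t'$ in a t-SCC different from that of $t$ with $s\rightsquigarrow t'$. *)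

theory Defs
  imports Main
begin

definition digraph :: "'a set \<Rightarrow> ('a \<times> 'a) set \<Rightarrow> bool" where
  "digraph V E \<longleftrightarrow> finite V \<and> E \<subseteq> V \<times> V"

definition weakly_connected :: "'a set \<Rightarrow> ('a \<times> 'a) set \<Rightarrow> bool" where
  "weakly_connected V E \<longleftrightarrow> (\<forall>u\<in>V. \<forall>v\<in>V. (u, v) \<in> (E \<union> E\<inverse>)\<^sup>*)"

definition reach :: "('a \<times> 'a) set \<Rightarrow> 'a \<Rightarrow> 'a \<Rightarrow> bool" where
  "reach E a b \<longleftrightarrow> (a, b) \<in> E\<^sup>*"

definition scc_of :: "('a \<times> 'a) set \<Rightarrow> 'a \<Rightarrow> 'a set" where
  "scc_of E u = {v. reach E u v \<and> reach E v u}"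

definition SCCs :: "'a set \<Rightarrow> ('a \<times> 'a) set \<Rightarrow> 'a set set" where
  "SCCs V E = scc_of E ` V"

definition out_edges :: "('a \<times> 'a) set \<Rightarrow> 'a set \<Rightarrow> ('a \<times> 'a) set" where
  "out_edges E S = {(u, v) \<in> E. u \<in> S \<and> v \<notin> S}"

definition in_edges :: "('a \<times> 'a) set \<Rightarrow> 'a set \<Rightarrow> ('a \<times> 'a) set" where
  "in_edges E S = {(u, v) \<in> E. u \<notin> S \<and> v \<in> S}"

definition sSCCs :: "'a set \<Rightarrow> ('a \<times> 'a) set \<Rightarrow> 'a set set" where
  "sSCCs V E = {S \<in> SCCs V E. out_edges E S \<noteq> {} \<and> in_edges E S = {}}"

definition tSCCs :: "'a set \<Rightarrow> ('a \<times> 'a) set \<Rightarrow> 'a set set" where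
  "tSCCs V E = {S \<in> SCCs V E. out_edges E S = {} \<and> in_edges E S \<noteq> {}}"

definition gamma :: "'a set \<Rightarrow> ('a \<times> 'a) set \<Rightarrow> nat" where
  "gamma V E = max (card (sSCCs V E)) (card (tSCCs V E))"

definition tight_edge :: "'a set \<Rightarrow> ('a \<times> 'a) set \<Rightarrow> 'a \<times> 'a \<Rightarrow> bool" where
  "tight_edge V E e \<longleftrightarrow> (case e of (t, s) \<Rightarrow>
     (t, s) \<in> (V \<times> V) - E
     \<and> (\<exists>S\<in>sSCCs V E. s \<in> S)
     \<and> (\<exists>T\<in>tSCCs V E. t \<in> T)
     \<and> (card (sSCCs V E) = 1 \<or>
          (\<exists>S'\<in>sSCCs V E. \<exists>s'\<in>S'. s \<notin> S' \<and> reach E s' t))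
     \<and> (card (tSCCs V E) = 1 \<or>
          (\<exists>T'\<in>tSCCs V E. \<exists>t'\<in>T'. t \<notin> T' \<and> reach E s t')))"

end

theory Submission
  imports Defs
begin

lemma reach_trans: "reach E a b \<Longrightarrow> reach E b c \<Longrightarrow> reach E a c"
  unfolding reach_def by simp

lemma reach_refl[simp]: "reach E a a"
  unfolding reach_def by simp

lemma reach_edge: "(a,b) \<in> E \<Longrightarrow> reach E a b"
  unfolding reach_def by simp

lemma reach_ins: "reach (insert (t,s) E) a b \<longleftrightarrow> reach E a b \<or> (reach E a t \<and> reach E s b)"
  unfolding reach_def by (simp add: rtrancl_insert)

lemma reach_conv: "reach (E\<inverse>) a b \<longleftrightarrow> reach E b a"
  unfolding reach_def by (simp add: rtrancl_converse)

lemma scc_in: "X \<in> SCCs V E \<Longrightarrow> x \<in> X \<Longrightarrow> X = scc_of E x"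
  unfolding SCCs_def scc_of_def by (auto intro: reach_trans)

lemma scc_self: "x \<in> scc_of E x"
  unfolding scc_of_def by simp

lemma source_closed:
  assumes "in_edges E X = {}" "reach E a b" "b \<in> X" shows "a \<in> X"
  using assms(2,3) unfolding reach_def
proof (induction rule: converse_rtrancl_induct)
  case base then show ?case by simp
next
  case (step y z)
  then show ?case using assms(1) unfolding in_edges_def by blast
qed

lemma sink_closed:
  assumes "out_edges E X = {}" "reach E a b" "a \<in> X" shows "b \<in> X"
  using assms(2,3) unfolding reach_def
proof (induction rule: rtrancl_induct)
  case base then show ?case by simp
next
  case (step y z)
  then show ?case using assms(1) unfolding out_edges_def by blast
qed

lemma isolated:
  assumes "weakly_connected V E" "out_edges E X = {}" "in_edges E X = {}" "x \<in> X" "x \<in> V" "y \<in> V"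
  shows "y \<in> X"
proof -
  have "(x,y) \<in> (E \<union> E\<inverse>)\<^sup>*" using assms(1,5,6) unfolding weakly_connected_def by blast
  then show ?thesis
  proof (induction rule: rtrancl_induct)
    case base then show ?case using assms(4) by simp
  next
    case (step y z)
    then show ?case using assms(2,3) unfolding out_edges_def in_edges_def by blast
  qed
qed

lemma reach_V: "E \<subseteq> V \<times> V \<Longrightarrow> reach E a b \<Longrightarrow> b = a \<or> b \<in> V"
  unfolding reach_def by (erule rtranclE) auto

lemma reach_V2: "E \<subseteq> V \<times> V \<Longrightarrow> reach E a b \<Longrightarrow> a = b \<or> a \<in> V"
  unfolding reach_def by (erule converse_rtranclE) auto

lemma bottom_exists:
  assumes "finite V" "E \<subseteq> V \<times> V"
  shows "\<exists>w. reach E v w \<and> (\<forall>z. reach E w z \<longrightarrow> reach E z w)"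
proof -
  have fin: "finite {z. reach E w z}" for w
    by (rule finite_subset[of _ "insert w V"]) (use reach_V[OF assms(2)] assms(1) in auto)
  obtain w where w: "reach E v w" and min: "\<forall>y. reach E v y \<longrightarrow> card {z. reach E w z} \<le> card {z. reach E y z}"
    using ex_has_least_nat[of "\<lambda>w. reach E v w" v "\<lambda>w. card {z. reach E w z}"] by auto
  have "reach E z w" if "reach E w z" for z
  proof -
    have sub: "{u. reach E z u} \<subseteq> {u. reach E w u}" using that by (auto intro: reach_trans)
    have "card {u. reach E w u} \<le> card {u. reach E z u}" using min reach_trans[OF w that] by blast
    then have "{u. reach E z u} = {u. reach E w u}" using card_subset_eq[OF fin sub] card_mono[OF fin sub] by simp
    then show ?thesis by auto
  qed
  then show ?thesis using w by blast
qed

lemma top_exists: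
  assumes "finite V" "E \<subseteq> V \<times> V"
  shows "\<exists>w. reach E w v \<and> (\<forall>z. reach E z w \<longrightarrow> reach E w z)"
  using bottom_exists[of V "E\<inverse>" v] assms by (auto simp: reach_conv)

lemma bottom_out: "\<forall>z. reach E w z \<longrightarrow> reach E z w \<Longrightarrow> out_edges E (scc_of E w) = {}"
  unfolding out_edges_def scc_of_def by (auto intro: reach_trans reach_edge)

lemma top_in: "\<forall>z. reach E z w \<longrightarrow> reach E w z \<Longrightarrow> in_edges E (scc_of E w) = {}"
  unfolding in_edges_def scc_of_def by (auto intro: reach_trans[OF reach_edge])

lemma edges_same:
  "s \<notin> X \<Longrightarrow> t \<notin> X \<Longrightarrow> out_edges (insert (t,s) E) X = out_edges E X"
  "s \<notin> X \<Longrightarrow> t \<notin> X \<Longrightarrow> in_edges (insert (t,s) E) X = in_edges E X"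
  unfolding out_edges_def in_edges_def by auto

lemma card_pick:
  assumes "finite A" "A - {c} = D" "c \<notin> D"
  shows "card A = card D + (if c \<in> A then 1 else 0)"
proof (cases "c \<in> A")
  case True
  then have "A = insert c D" using assms(2) by blast
  then show ?thesis using assms True by simp
next
  case False
  then have "A = D" using assms(2) by blast
  then show ?thesis using False by simp
qed

theorem proposition1:
  fixes V :: "'a set" and E :: "('a \<times> 'a) set" and e :: "'a \<times> 'a"
  assumes "digraph V E"
    and "weakly_connected V E"
    and "tight_edge V E e"
  shows "gamma V (insert e E) = gamma V E - 1"
proof -
  obtain t s where e: "e = (t,s)" by (cases e)
  define E' where "E' = insert (t,s) E"
  have finV: "finite V" and EV: "E \<subseteq> V \<times> V" using assms(1) unfolding digraph_def by auto
  have tsE: "(t,s) \<notin> E" and tV: "t \<in> V" and sV: "s \<in> V"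
    and S0ex: "\<exists>S\<in>sSCCs V E. s \<in> S" and T0ex: "\<exists>T\<in>tSCCs V E. t \<in> T"
    and c3: "card (sSCCs V E) = 1 \<or> (\<exists>S'\<in>sSCCs V E. \<exists>s'\<in>S'. s \<notin> S' \<and> reach E s' t)"
    and c4: "card (tSCCs V E) = 1 \<or> (\<exists>T'\<in>tSCCs V E. \<exists>t'\<in>T'. t \<notin> T' \<and> reach E s t')"
    using assms(3) unfolding tight_edge_def e by auto
  define S0 where "S0 = scc_of E s"
  define T0 where "T0 = scc_of E t"
  have S0s: "S0 \<in> sSCCs V E"
  proof -
    obtain S where S: "S \<in> sSCCs V E" "s \<in> S" using S0ex by blast
    have "S \<in> SCCs V E" using S(1) unfolding sSCCs_def by simp
    then have "S = S0" using scc_in S(2) unfolding S0_def by metis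
    then show ?thesis using S(1) by simp
  qed
  have T0t: "T0 \<in> tSCCs V E"
  proof -
    obtain S where S: "S \<in> tSCCs V E" "t \<in> S" using T0ex by blast
    have "S \<in> SCCs V E" using S(1) unfolding tSCCs_def by simp
    then have "S = T0" using scc_in S(2) unfolding T0_def by metis
    then show ?thesis using S(1) by simp
  qed
  have S0in: "in_edges E S0 = {}" using S0s unfolding sSCCs_def by simp
  have S0out: "out_edges E S0 \<noteq> {}" using S0s unfolding sSCCs_def by simp
  have T0out: "out_edges E T0 = {}" using T0t unfolding tSCCs_def by simp
  have T0in: "in_edges E T0 \<noteq> {}" using T0t unfolding tSCCs_def by simp
  have src: "reach E s a" if "reach E a s" for a
    using source_closed[OF S0in that] scc_self[of s E] unfolding S0_def scc_of_def by blast
  have snk: "reach E b t" if "reach E t b" for b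
    using sink_closed[OF T0out that] scc_self[of t E] unfolding T0_def scc_of_def by blast
  have finS: "finite (SCCs V X)" for X using finV unfolding SCCs_def by simp
  have finsS: "finite (sSCCs V X)" for X using finS unfolding sSCCs_def by simp
  have fintS: "finite (tSCCs V X)" for X using finS unfolding tSCCs_def by simp
  have sS: "X = S0" if "X \<in> sSCCs V E" "s \<in> X" for X
    using scc_in[of X V E s] that unfolding S0_def sSCCs_def by simp
  have tT: "X = T0" if "X \<in> tSCCs V E" "t \<in> X" for X
    using scc_in[of X V E t] that unfolding T0_def tSCCs_def by simp
  have A1: "card (sSCCs V E) \<ge> 1" using card_gt_0_iff[of "sSCCs V E"] S0s finsS by auto
  have B1: "card (tSCCs V E) \<ge> 1" using card_gt_0_iff[of "tSCCs V E"] T0t fintS by auto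
  show ?thesis
  proof (cases "reach E s t")
    case False
    have sccEq: "scc_of E' x = scc_of E x" for x
      using False unfolding scc_of_def E'_def reach_ins by (auto intro: reach_trans)
    have SCCsEq: "SCCs V E' = SCCs V E" unfolding SCCs_def sccEq by simp
    have tS0: "t \<notin> S0" using False unfolding S0_def scc_of_def by simp
    have sT0: "s \<notin> T0" using False unfolding T0_def scc_of_def by simp
    have sEq: "sSCCs V E' = sSCCs V E - {S0}"
    proof -
      have "(out_edges E' X \<noteq> {} \<and> in_edges E' X = {}) \<longleftrightarrow>
            ((out_edges E X \<noteq> {} \<and> in_edges E X = {}) \<and> X \<noteq> S0)" if X: "X \<in> SCCs V E" for X
      proof (cases "s \<in> X")
        case True
        then have "X = S0" using scc_in[OF X] unfolding S0_def by blast
        then have "(t,s) \<in> in_edges E' X" using tS0 unfolding in_edges_def E'_def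
          by (auto simp: S0_def scc_self)
        then show ?thesis using \<open>X = S0\<close> by auto
      next
        case sX: False
        show ?thesis
        proof (cases "t \<in> X")
          case True
          then have "X = T0" using scc_in[OF X] unfolding T0_def by blast
          have "in_edges E X \<subseteq> in_edges E' X" unfolding in_edges_def E'_def by auto
          then show ?thesis using \<open>X = T0\<close> T0out T0in by auto
        next
          case False
          have "X \<noteq> S0" using sX scc_self[of s E] unfolding S0_def by blast
          then show ?thesis using edges_same[OF sX False] unfolding E'_def by simp
        qed
      qed
      then show ?thesis unfolding sSCCs_def SCCsEq by auto
    qed
    have tEq: "tSCCs V E' = tSCCs V E - {T0}"
    proof -
      have "(out_edges E' X = {} \<and> in_edges E' X \<noteq> {}) \<longleftrightarrow>
            ((out_edges E X = {} \<and> in_edges E X \<noteq> {}) \<and> X \<noteq> T0)" if X: "X \<in> SCCs V E" for X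
      proof (cases "t \<in> X")
        case True
        then have "X = T0" using scc_in[OF X] unfolding T0_def by blast
        then have "(t,s) \<in> out_edges E' X" using sT0 unfolding out_edges_def E'_def
          by (auto simp: T0_def scc_self)
        then show ?thesis using \<open>X = T0\<close> by auto
      next
        case tX: False
        show ?thesis
        proof (cases "s \<in> X")
          case True
          then have "X = S0" using scc_in[OF X] unfolding S0_def by blast
          have "out_edges E X \<subseteq> out_edges E' X" unfolding out_edges_def E'_def by auto
          then show ?thesis using \<open>X = S0\<close> S0out S0in by auto
        next
          case False
          have "X \<noteq> T0" using tX scc_self[of t E] unfolding T0_def by blast
          then show ?thesis using edges_same[OF False tX] unfolding E'_def by simp
        qed
      qed
      then show ?thesis unfolding tSCCs_def SCCsEq by auto
    qed
    have "card (sSCCs V E') = card (sSCCs V E) - 1" unfolding sEq using S0s finsS by simp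
    moreover have "card (tSCCs V E') = card (tSCCs V E) - 1" unfolding tEq using T0t fintS by simp
    ultimately show ?thesis unfolding gamma_def e E'_def[symmetric] using A1 B1 by simp
  next
    case True
    define C where "C = {y. reach E s y \<and> reach E y t}"
    have sC: "s \<in> C" and tC: "t \<in> C" using True unfolding C_def by auto
    have sccC: "scc_of E' x = C" if "x \<in> C" for x
      using that unfolding C_def scc_of_def E'_def reach_ins by (auto intro: reach_trans)
    have sccN: "scc_of E' x = scc_of E x" if "x \<notin> C" for x
      using that unfolding C_def scc_of_def E'_def reach_ins by (auto intro: reach_trans)
    have disj: "scc_of E x \<inter> C = {}" if "x \<notin> C" for x
      using that unfolding C_def scc_of_def by (auto intro: reach_trans)
    have CS: "C \<in> SCCs V E'" using sccC[OF sC] sV unfolding SCCs_def by blast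
    have sEq: "sSCCs V E' - {C} = sSCCs V E - {S0}"
    proof
      show "sSCCs V E' - {C} \<subseteq> sSCCs V E - {S0}"
      proof
        fix X assume X: "X \<in> sSCCs V E' - {C}"
        then obtain x where x: "x \<in> V" "X = scc_of E' x" unfolding sSCCs_def SCCs_def by auto
        have xC: "x \<notin> C" using X x sccC by auto
        have XE: "X = scc_of E x" using sccN[OF xC] x by simp
        have "s \<notin> X" "t \<notin> X" using disj[OF xC] XE sC tC by auto
        moreover have "X \<noteq> S0" using \<open>s \<notin> X\<close> scc_self[of s E] unfolding S0_def by blast
        ultimately show "X \<in> sSCCs V E - {S0}" using X XE x edges_same[of s X t E]
          unfolding sSCCs_def SCCs_def E'_def by auto
      qed
    next
      show "sSCCs V E - {S0} \<subseteq> sSCCs V E' - {C}"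
      proof
        fix X assume X: "X \<in> sSCCs V E - {S0}"
        then obtain x where x: "x \<in> V" "X = scc_of E x" unfolding sSCCs_def SCCs_def by auto
        have Xin: "in_edges E X = {}" using X unfolding sSCCs_def by auto
        have xC: "x \<notin> C"
        proof
          assume "x \<in> C"
          then have "reach E s x" unfolding C_def by simp
          then have "s \<in> X" using source_closed[OF Xin] x scc_self by metis
          then show False using sS X by auto
        qed
        have XE: "X = scc_of E' x" using sccN[OF xC] x by simp
        have "s \<notin> X" "t \<notin> X" using disj[OF xC] x sC tC by auto
        moreover have "X \<noteq> C" using \<open>s \<notin> X\<close> sC by auto
        ultimately show "X \<in> sSCCs V E' - {C}" using X XE x edges_same[of s X t E]
          unfolding sSCCs_def SCCs_def E'_def by auto
      qed
    qed
    have tEq: "tSCCs V E' - {C} = tSCCs V E - {T0}"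
    proof
      show "tSCCs V E' - {C} \<subseteq> tSCCs V E - {T0}"
      proof
        fix X assume X: "X \<in> tSCCs V E' - {C}"
        then obtain x where x: "x \<in> V" "X = scc_of E' x" unfolding tSCCs_def SCCs_def by auto
        have xC: "x \<notin> C" using X x sccC by auto
        have XE: "X = scc_of E x" using sccN[OF xC] x by simp
        have "s \<notin> X" "t \<notin> X" using disj[OF xC] XE sC tC by auto
        moreover have "X \<noteq> T0" using \<open>t \<notin> X\<close> scc_self[of t E] unfolding T0_def by blast
        ultimately show "X \<in> tSCCs V E - {T0}" using X XE x edges_same[of s X t E]
          unfolding tSCCs_def SCCs_def E'_def by auto
      qed
    next
      show "tSCCs V E - {T0} \<subseteq> tSCCs V E' - {C}"
      proof
        fix X assume X: "X \<in> tSCCs V E - {T0}"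
        then obtain x where x: "x \<in> V" "X = scc_of E x" unfolding tSCCs_def SCCs_def by auto
        have Xout: "out_edges E X = {}" using X unfolding tSCCs_def by auto
        have xC: "x \<notin> C"
        proof
          assume "x \<in> C"
          then have "reach E x t" unfolding C_def by simp
          then have "t \<in> X" using sink_closed[OF Xout] x scc_self by metis
          then show False using tT X by auto
        qed
        have XE: "X = scc_of E' x" using sccN[OF xC] x by simp
        have "s \<notin> X" "t \<notin> X" using disj[OF xC] x sC tC by auto
        moreover have "X \<noteq> C" using \<open>s \<notin> X\<close> sC by auto
        ultimately show "X \<in> tSCCs V E' - {C}" using X XE x edges_same[of s X t E]
          unfolding tSCCs_def SCCs_def E'_def by auto
      qed
    qed
    have CnS: "C \<notin> sSCCs V E - {S0}" using sS sC by blast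
    have CnT: "C \<notin> tSCCs V E - {T0}" using tT tC by blast
    have cardS: "card (sSCCs V E') = (card (sSCCs V E) - 1) + (if C \<in> sSCCs V E' then 1 else 0)"
      using card_pick[OF finsS sEq CnS] S0s finsS by simp
    have cardT: "card (tSCCs V E') = (card (tSCCs V E) - 1) + (if C \<in> tSCCs V E' then 1 else 0)"
      using card_pick[OF fintS tEq CnT] T0t fintS by simp
    have i1: "C \<notin> sSCCs V E'" if ne: "card (sSCCs V E) \<noteq> 1"
    proof -
      obtain S' s' where S': "S' \<in> sSCCs V E" "s' \<in> S'" "s \<notin> S'" "reach E s' t" using c3 ne by blast
      have "s' \<notin> C"
      proof
        assume "s' \<in> C"
        then have "reach E s s'" unfolding C_def by simp
        then have "s \<in> S'" using source_closed[of E S' s s'] S' unfolding sSCCs_def by blast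
        then show False using S' by simp
      qed
      then have "in_edges E C \<noteq> {}" using source_closed[of E C s' t] S'(4) tC by blast
      moreover have "in_edges E C \<subseteq> in_edges E' C" unfolding in_edges_def E'_def by auto
      ultimately show ?thesis unfolding sSCCs_def by auto
    qed
    have i2: "C \<notin> tSCCs V E'" if ne: "card (tSCCs V E) \<noteq> 1"
    proof -
      obtain T' t' where T': "T' \<in> tSCCs V E" "t' \<in> T'" "t \<notin> T'" "reach E s t'" using c4 ne by blast
      have "t' \<notin> C"
      proof
        assume "t' \<in> C"
        then have "reach E t' t" unfolding C_def by simp
        then have "t \<in> T'" using sink_closed[of E T' t' t] T' unfolding tSCCs_def by blast
        then show False using T' by simp
      qed
      then have "out_edges E C \<noteq> {}" using sink_closed[of E C s t'] T'(4) sC by blast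
      moreover have "out_edges E C \<subseteq> out_edges E' C" unfolding out_edges_def E'_def by auto
      ultimately show ?thesis unfolding tSCCs_def by auto
    qed
    have i3: "in_edges E' C = {}" if A: "card (sSCCs V E) = 1"
    proof (rule ccontr)
      assume "in_edges E' C \<noteq> {}"
      then obtain u v where uv: "(u,v) \<in> E'" "u \<notin> C" "v \<in> C" unfolding in_edges_def by auto
      have uvE: "(u,v) \<in> E" using uv tC unfolding E'_def by auto
      have ut: "reach E u t" using uv(3) reach_trans[OF reach_edge[OF uvE]] unfolding C_def by auto
      then have nsu: "\<not> reach E s u" using uv(2) unfolding C_def by auto
      obtain w where w: "reach E w u" "\<forall>z. reach E z w \<longrightarrow> reach E w z"
        using top_exists[OF finV EV] by blast
      have uV: "u \<in> V" using uvE EV by auto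
      have wV: "w \<in> V" using reach_V2[OF EV w(1)] uV by auto
      define Z where "Z = scc_of E w"
      have Zin: "in_edges E Z = {}" using top_in[OF w(2)] unfolding Z_def .
      have "reach E s w"
      proof (cases "out_edges E Z = {}")
        case True
        have "s \<in> Z" using isolated[OF assms(2) True Zin scc_self[of w E, folded Z_def] wV sV] .
        then show ?thesis unfolding Z_def scc_of_def by simp
      next
        case False
        have "Z \<in> sSCCs V E" using Zin False wV unfolding sSCCs_def SCCs_def Z_def by auto
        moreover obtain q where "sSCCs V E = {q}" using A card_1_singletonE by blast
        then have "sSCCs V E = {S0}" using S0s by simp
        ultimately have "Z = S0" by simp
        then show ?thesis using scc_self[of w E] unfolding Z_def S0_def scc_of_def by auto
      qed
      then show False using nsu reach_trans[OF _ w(1)] by blast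
    qed
    have i4: "out_edges E' C = {}" if B: "card (tSCCs V E) = 1"
    proof (rule ccontr)
      assume "out_edges E' C \<noteq> {}"
      then obtain u v where uv: "(u,v) \<in> E'" "u \<in> C" "v \<notin> C" unfolding out_edges_def by auto
      have uvE: "(u,v) \<in> E" using uv sC unfolding E'_def by auto
      have sv: "reach E s v" using uv(2) reach_trans[OF _ reach_edge[OF uvE]] unfolding C_def by auto
      then have nvt: "\<not> reach E v t" using uv(3) unfolding C_def by auto
      obtain w where w: "reach E v w" "\<forall>z. reach E w z \<longrightarrow> reach E z w"
        using bottom_exists[OF finV EV] by blast
      have vV: "v \<in> V" using uvE EV by auto
      have wV: "w \<in> V" using reach_V[OF EV w(1)] vV by auto
      define Z where "Z = scc_of E w"
      have Zout: "out_edges E Z = {}" using bottom_out[OF w(2)] unfolding Z_def .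
      have "reach E w t"
      proof (cases "in_edges E Z = {}")
        case True
        have "t \<in> Z" using isolated[OF assms(2) Zout True scc_self[of w E, folded Z_def] wV tV] .
        then show ?thesis unfolding Z_def scc_of_def by simp
      next
        case False
        have "Z \<in> tSCCs V E" using Zout False wV unfolding tSCCs_def SCCs_def Z_def by auto
        moreover obtain q where "tSCCs V E = {q}" using B card_1_singletonE by blast
        then have "tSCCs V E = {T0}" using T0t by simp
        ultimately have "Z = T0" by simp
        then show ?thesis using scc_self[of w E] unfolding Z_def T0_def scc_of_def by auto
      qed
      then show False using nvt reach_trans[OF w(1)] by blast
    qed
    have j3: "C \<notin> tSCCs V E'" if "card (sSCCs V E) = 1" using i3[OF that] unfolding tSCCs_def by auto
    have j4: "C \<notin> sSCCs V E'" if "card (tSCCs V E) = 1" using i4[OF that] unfolding sSCCs_def by auto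
    show ?thesis unfolding gamma_def e E'_def[symmetric] cardS cardT
      using A1 B1 i1 i2 j3 j4 by (cases "card (sSCCs V E) = 1"; cases "card (tSCCs V E) = 1") auto
  qed
qed

end
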